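(* Let $\Theta\subset\mathbb{R}$ be a finite nonempty set of nonzero reals with $|\bar\theta|\in(0,\pi)$ for all $\bar\theta\in\Theta$, let $\bar\theta_M:=\max_{\bar\theta\in\Theta}|\bar\theta|$, and let $0<\gamma_\theta<\frac{4r_o\|p_d-p_o\|}{\pi^2}$. Set $\delta^*_{\mathcal{V}}:=\Big(\frac{2r_o\|p_d-p_o\|}{\pi^2}-\frac{\gamma_\theta}{2}\Big)\bar\theta_M^2$. Then for every $\delta_{\mathcal{V}}\in(0,\delta^*_{\mathcal{V}}]$, $\mathcal{V}_{nav}$ is a synergistic navigation function on $\mathcal{X}_p\times\mathbb{R}$ relative to $\mathcal{A}_p=\{(p_d,0)\}$ with gap exceeding $\delta_{\mathcal{V}}$, i.e. $\mathcal{V}_{nav}(p,\theta)-\min_{\bar\theta\in\Theta}\mathcal{V}_{nav}(p,\bar\theta)>\delta_{\mathcal{V}}$ for all $(p,\theta)\in C_{\mathcal{V}_{nav}}\setminus\mathcal{A}_p$.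
   Context: Obstacle $\mathcal{O}=\{z\in\mathbb{R}^2:\|z-p_o\|\le r_o\}$ with center $p_o\in\mathbb{R}^2$ and radius $r_o>0$; safety margin $\varepsilon>0$; free space $\mathcal{X}_p=\{p\in\mathbb{R}^2:\|p-p_o\|\ge r_o+\varepsilon\}$. Distance $d_o(p)=\|p-p_o\|-r_o$. Destination $p_d\in\mathcal{X}_p$, $r_d:=d_o(p_d)$, and $r_s\in(\varepsilon,r_d)$. Barrier $\phi(z)=(z-r_s)^2\ln(r_s/z)$ for $z\in(0,r_s]$ and $\phi(z)=0$ for $z>r_s$. Navigation function $V_{nav}(p)=\frac12\|p-p_d\|^2+\varrho\,\phi(d_o(p))$ with $\varrho>0$; $C_{V_{nav}}=\{p\in\mathcal{X}_p:\nabla_pV_{nav}(p)=0\}$. Rotation $\mathcal{R}(\theta)=\exp(\theta\Delta)=\begin{bmatrix}\cos\theta&-\sin\theta\\ \sin\theta&\cos\theta\end{bmatrix}$ with $\Delta=\begin{bmatrix}0&-1\\1&0\end{bmatrix}$. Transformation $\mathcal{T}(p,\theta)=p_o+\mathcal{R}(\theta)(p-p_o)$. Modified navigation function $\mathcal{V}_{nav}(p,\theta)=\frac12\|\mathcal{T}(p,\theta)-p_d\|^2+\varrho\phi(d_o(p))+\frac{\gamma_\theta}{2}\theta^2$. Critical set $C_{\mathcal{V}_{nav}}=\{(p,\theta)\in\mathcal{X}_p\times\mathbb{R}:\nabla_p\mathcal{V}_{nav}=0,\nabla_\theta\mathcal{V}_{nav}=0\}$ (which equals $C_{V_{nav}}\times\{0\}$).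 Definition: for finite nonempty $\Theta\subset\mathbb{R}$, a function $\mathcal{V}:\mathcal{X}_p\times\mathbb{R}\to\mathbb{R}_{\ge0}$ is a synergistic navigation function relative to $\mathcal{A}_p$ with gap exceeding $\delta_{\mathcal{V}}>0$ if $\mathcal{V}(p,\theta)-\min_{\bar\theta\in\Theta}\mathcal{V}(p,\bar\theta)>\delta_{\mathcal{V}}$ for all $(p,\theta)\in C_{\mathcal{V}}\setminus\mathcal{A}_p$. *)

theory Defs
  imports "HOL-Analysis.Analysis"
begin

definition rot :: "real \<Rightarrow> real^2^2" where
  "rot \<theta> = vector [vector [cos \<theta>, - sin \<theta>], vector [sin \<theta>, cos \<theta>]]"

definition transf :: "real^2 \<Rightarrow> real^2 \<Rightarrow> real \<Rightarrow> real^2" where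
  "transf p_o p \<theta> = p_o + rot \<theta> *v (p - p_o)"

definition d_o :: "real^2 \<Rightarrow> real \<Rightarrow> real^2 \<Rightarrow> real" where
  "d_o p_o r_o p = norm (p - p_o) - r_o"

definition free_space :: "real^2 \<Rightarrow> real \<Rightarrow> real \<Rightarrow> (real^2) set" where
  "free_space p_o r_o \<epsilon> = {p. norm (p - p_o) \<ge> r_o + \<epsilon>}"

text \<open>Barrier: (z - r_s)^2 ln(r_s/z) on (0, r_s], zero for z > r_s
  (only evaluated at z >= epsilon > 0 in the statement).\<close>
definition barrier :: "real \<Rightarrow> real \<Rightarrow> real" where
  "barrier r_s z = (if z \<le> r_s then (z - r_s)^2 * ln (r_s / z) else 0)"

definition Vnav_mod :: "real^2 \<Rightarrow> real \<Rightarrow> real^2 \<Rightarrow> real \<Rightarrow> real \<Rightarrow> real \<Rightarrow> real^2 \<Rightarrow> real \<Rightarrow> real" where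
  "Vnav_mod p_o r_o p_d r_s \<rho> \<gamma> p \<theta> =
     (1/2) * (norm (transf p_o p \<theta> - p_d))^2 + \<rho> * barrier r_s (d_o p_o r_o p) + (\<gamma>/2) * \<theta>^2"

definition crit_set :: "(real^2) set \<Rightarrow> (real^2 \<Rightarrow> real \<Rightarrow> real) \<Rightarrow> ((real^2) \<times> real) set" where
  "crit_set X V = {(p, \<theta>). p \<in> X \<and>
       ((\<lambda>q. V q \<theta>) has_derivative (\<lambda>h. 0)) (at p) \<and>
       ((\<lambda>t. V p t) has_real_derivative 0) (at \<theta>)}"

definition synergistic_nav :: "real set \<Rightarrow> (real^2) set \<Rightarrow> (real^2 \<Rightarrow> real \<Rightarrow> real) \<Rightarrow> ((real^2) \<times> real) set \<Rightarrow> real \<Rightarrow> bool" where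
  "synergistic_nav \<Theta> X V A \<delta> \<longleftrightarrow>
     (\<forall>p\<in>X. \<forall>\<theta>. V p \<theta> \<ge> 0) \<and>
     (\<forall>(p, \<theta>) \<in> crit_set X V - A. V p \<theta> - Min ((\<lambda>t. V p t) ` \<Theta>) > \<delta>)"

end

theory Submission
  imports Defs "HOL-Analysis.Analysis"
begin


lemma norm2: "norm (v::real^2) = sqrt (v$1^2 + v$2^2)"
  by (simp add: norm_eq_sqrt_inner inner_vec_def sum_2 power2_eq_square)

lemma rot_comp: "(rot t *v x)$1 = cos t * x$1 - sin t * x$2" "(rot t *v x)$2 = sin t * x$1 + cos t * x$2"
  by (simp_all add: matrix_vector_mult_def sum_2 rot_def)

lemma sq_ident: "(c * a - d * b - u)^2 + (d * a + c * b - z)^2 =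
   (c^2+d^2)*(a^2+b^2) + (u^2+z^2) - 2*c*(a * u+b * z) - 2*d*(a * z-b * u)" for a b c d u z :: real
  by (simp add: power2_eq_square algebra_simps)

lemma Vform: "Vnav_mod p_o r_o p_d r_s \<rho> \<gamma> p t =
  ((p-p_o)$1^2 + (p-p_o)$2^2 + (p_d-p_o)$1^2 + (p_d-p_o)$2^2)/2
  - cos t * ((p-p_o)$1*(p_d-p_o)$1 + (p-p_o)$2*(p_d-p_o)$2)
  - sin t * ((p-p_o)$1*(p_d-p_o)$2 - (p-p_o)$2*(p_d-p_o)$1)
  + \<rho> * barrier r_s (sqrt((p-p_o)$1^2 + (p-p_o)$2^2) - r_o) + \<gamma>/2*t^2"
proof -
  have e: "transf p_o p t - p_d = rot t *v (p - p_o) - (p_d - p_o)"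
    by (simp add: transf_def algebra_simps)
  have "(norm (transf p_o p t - p_d))^2 = (cos t * (p-p_o)$1 - sin t * (p-p_o)$2 - (p_d-p_o)$1)^2
     + (sin t * (p-p_o)$1 + cos t * (p-p_o)$2 - (p_d-p_o)$2)^2"
    unfolding e norm2 by (simp add: rot_comp)
  also have "\<dots> = ((p-p_o)$1^2 + (p-p_o)$2^2) + ((p_d-p_o)$1^2 + (p_d-p_o)$2^2)
     - 2*cos t*((p-p_o)$1*(p_d-p_o)$1 + (p-p_o)$2*(p_d-p_o)$2)
     - 2 * sin t * ((p-p_o)$1*(p_d-p_o)$2 - (p-p_o)$2*(p_d-p_o)$1)"
    unfolding sq_ident by simp
  finally have n: "(norm (transf p_o p t - p_d))^2 = \<dots>" .
  show ?thesis
    unfolding Vnav_mod_def n d_o_def norm2[of "p - p_o"] by simp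
qed

lemma path_deriv:
  assumes "(F has_derivative (\<lambda>h. 0)) (at p)"
  shows "((\<lambda>s::real. F (p + s *\<^sub>R h)) has_real_derivative 0) (at 0)"
proof -
  have "((\<lambda>s::real. p + s *\<^sub>R h) has_derivative (\<lambda>s. s *\<^sub>R h)) (at 0)"
    by (auto intro!: derivative_eq_intros)
  from has_derivative_compose[OF this, of F "\<lambda>h. 0"] assms
  have "((\<lambda>s::real. F (p + s *\<^sub>R h)) has_derivative (\<lambda>s. 0)) (at 0)" by simp
  moreover have "(*) (0::real) = (\<lambda>s. 0)" by auto
  ultimately show ?thesis by (simp add: has_field_derivative_def)
qed

lemma deriv0_bound:
  fixes g :: "real \<Rightarrow> real"
  assumes "(g has_real_derivative 0) (at 0)" "\<eta> > 0"
    "\<And>s. 0 < s \<Longrightarrow> s < \<eta> \<Longrightarrow> g s - g 0 \<le> a * s + b * (s * s)"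
  shows "0 \<le> a"
proof -
  have "((\<lambda>y. (g y - g 0) / (y - 0)) \<longlongrightarrow> 0) (at 0)"
    using assms(1) has_field_derivative_iff by blast
  then have l1: "((\<lambda>y. (g y - g 0) / y) \<longlongrightarrow> 0) (at_right 0)"
    by (simp add: filterlim_at_split)
  have l2: "((\<lambda>y. a + b*y) \<longlongrightarrow> a + b*0) (at_right 0)"
    by (intro tendsto_intros)
  have ev: "eventually (\<lambda>y. (g y - g 0) / y \<le> a + b*y) (at_right 0)"
    unfolding eventually_at_right[of 0 \<eta>, OF assms(2)]
  proof (intro exI conjI allI impI)
    fix y assume y: "0 < y" "y < \<eta>"
    have "g y - g 0 \<le> (a + b*y) * y" using assms(3)[OF y] by (simp add: algebra_simps)
    then show "(g y - g 0) / y \<le> a + b*y" using y by (simp add: divide_simps)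
  qed (use assms(2) in auto)
  show ?thesis using tendsto_le[OF _ l2 l1 ev] by simp
qed


lemma jordan: assumes "0 \<le> x" "x \<le> pi/2" shows "2*x/pi \<le> sin x"
proof -
  have c: "concave_on {0..pi/2} sin"
  proof (rule f''_le0_imp_concave[where f'=cos and f''="\<lambda>x. - sin x"])
    show "convex {0..pi/2}" by simp
  next
    fix x :: real assume "x \<in> {0..pi/2}"
    show "(sin has_real_derivative cos x) (at x)" by (rule DERIV_sin)
  next
    fix x :: real assume "x \<in> {0..pi/2}"
    show "(cos has_real_derivative - sin x) (at x)" by (rule DERIV_cos)
  next
    fix x :: real assume "x \<in> {0..pi/2}"
    then have "0 \<le> sin x" by (intro sin_ge_zero) auto
    then show "- sin x \<le> 0" by simp
  qed
  have "0 \<le> 2*x/pi" "2*x/pi \<le> 1" using assms by (auto simp: divide_simps)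
  from concave_onD[OF c this(1) this(2), of 0 "pi/2"]
  have "(1 - 2*x/pi) * sin 0 + (2*x/pi) * sin (pi/2) \<le> sin ((1 - 2*x/pi) * 0 + (2*x/pi) * (pi/2))"
    by auto
  then show ?thesis by simp
qed

lemma cos_bound: assumes "\<bar>t\<bar> \<le> pi" shows "2*t^2/pi^2 \<le> 1 - cos t"
proof -
  have "2*\<bar>t/2\<bar>/pi \<le> sin \<bar>t/2\<bar>" using jordan[of "\<bar>t/2\<bar>"] assms by auto
  then have "(2*\<bar>t/2\<bar>/pi)^2 \<le> (sin \<bar>t/2\<bar>)^2" by (intro power_mono) auto
  moreover have "(sin \<bar>t/2\<bar>)^2 = (sin (t/2))^2" by (cases "t \<ge> 0") auto
  moreover have "1 - cos t = 2 * (sin (t/2))^2" using cos_double_sin[of "t/2"] by simp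
  moreover have "(2*\<bar>t/2\<bar>/pi)^2 = t^2/pi^2" by (simp add: power_divide power2_abs)
  ultimately show ?thesis by simp
qed


lemma barrier_nonneg: "0 < z \<Longrightarrow> 0 < r_s \<Longrightarrow> 0 \<le> barrier r_s z"
  unfolding barrier_def by (auto intro!: mult_nonneg_nonneg ln_ge_zero simp: divide_simps)

lemma barrier_mono: assumes "0 < z" "z \<le> z'" "0 < r_s" shows "barrier r_s z' \<le> barrier r_s z"
proof (cases "z' \<le> r_s")
  case False then show ?thesis using barrier_nonneg[OF assms(1,3)] by (simp add: barrier_def)
next
  case True
  then have zr: "z \<le> r_s" using assms by simp
  have "(r_s - z')^2 \<le> (r_s - z)^2" using assms True by (intro power_mono) auto
  then have "(z' - r_s)^2 \<le> (z - r_s)^2" by (simp add: power2_commute)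
  moreover have "ln (r_s/z') \<le> ln (r_s/z)" using assms by (auto intro!: divide_left_mono mult_pos_pos)
  moreover have "0 \<le> ln (r_s/z')" using assms True by (auto intro!: ln_ge_zero simp: divide_simps)
  ultimately show ?thesis using True zr unfolding barrier_def by (auto intro!: mult_mono)
qed


lemma comp_eqs: fixes p p_o h :: "real^2" shows
  "(p + s *\<^sub>R h - p_o)$1 = (p - p_o)$1 + s * h$1" "(p + s *\<^sub>R h - p_o)$2 = (p - p_o)$2 + s * h$2"
  by simp_all

theorem lemma3:
  fixes p_o p_d :: "real^2" and r_o \<epsilon> r_s \<rho> \<gamma> :: real and \<Theta> :: "real set"
  assumes "r_o > 0" and "\<epsilon> > 0"
    and "p_d \<in> free_space p_o r_o \<epsilon>"
    and "\<epsilon> < r_s" and "r_s < d_o p_o r_o p_d"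
    and "\<rho> > 0"
    and "finite \<Theta>" and "\<Theta> \<noteq> {}"
    and "\<forall>t\<in>\<Theta>. 0 < \<bar>t\<bar> \<and> \<bar>t\<bar> < pi"
    and "0 < \<gamma>" and "\<gamma> < 4 * r_o * norm (p_d - p_o) / pi^2"
  shows "\<forall>\<delta>. 0 < \<delta> \<and>
           \<delta> \<le> (2 * r_o * norm (p_d - p_o) / pi^2 - \<gamma> / 2) * (Max (abs ` \<Theta>))^2 \<longrightarrow>
         synergistic_nav \<Theta> (free_space p_o r_o \<epsilon>) (Vnav_mod p_o r_o p_d r_s \<rho> \<gamma>) {(p_d, 0)} \<delta>"
proof (intro allI impI)
  fix \<delta> assume \<delta>: "0 < \<delta> \<and> \<delta> \<le> (2 * r_o * norm (p_d - p_o) / pi^2 - \<gamma> / 2) * (Max (abs ` \<Theta>))^2"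
  let ?V = "Vnav_mod p_o r_o p_d r_s \<rho> \<gamma>"
  let ?X = "free_space p_o r_o \<epsilon>"
  have rs: "0 < r_s" using assms by simp
  have nonneg: "\<forall>p\<in>?X. \<forall>\<theta>. ?V p \<theta> \<ge> 0"
  proof (intro ballI allI)
    fix p \<theta> assume "p \<in> ?X"
    then have "0 < d_o p_o r_o p" using assms by (auto simp: free_space_def d_o_def)
    then have "0 \<le> barrier r_s (d_o p_o r_o p)" using barrier_nonneg rs by blast
    then show "?V p \<theta> \<ge> 0" unfolding Vnav_mod_def using assms by (auto intro!: add_nonneg_nonneg)
  qed
  define w1 where "w1 = (p_d - p_o)$1"
  define w2 where "w2 = (p_d - p_o)$2"
  define W where "W = w1^2 + w2^2"
  have nW: "norm (p_d - p_o) = sqrt W" by (simp add: norm2 W_def w1_def w2_def)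
  have Wpos: "sqrt W > r_o + r_s" using assms(5) nW by (simp add: d_o_def)
  have main: "?V p \<theta> - Min ((\<lambda>t. ?V p t) ` \<Theta>) > \<delta>"
    if crit: "(p, \<theta>) \<in> crit_set ?X ?V" and ne: "(p, \<theta>) \<noteq> (p_d, 0)" for p \<theta>
  proof -
    have pX: "p \<in> ?X" and dp: "((\<lambda>q. ?V q \<theta>) has_derivative (\<lambda>h. 0)) (at p)"
      and dt: "((\<lambda>t. ?V p t) has_real_derivative 0) (at \<theta>)"
      using crit unfolding crit_set_def by blast+
    define x1 where "x1 = (p - p_o)$1"
    define x2 where "x2 = (p - p_o)$2"
    define N where "N = x1^2 + x2^2"
    define A where "A = x1*w1 + x2*w2"
    define B where "B = x1*w2 - x2*w1"
    have VF: "?V q t = ((q-p_o)$1^2 + (q-p_o)$2^2 + W)/2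
      - cos t * ((q-p_o)$1*w1 + (q-p_o)$2*w2) - sin t * ((q-p_o)$1*w2 - (q-p_o)$2*w1)
      + \<rho> * barrier r_s (sqrt((q-p_o)$1^2 + (q-p_o)$2^2) - r_o) + \<gamma>/2*t^2" for q t
      unfolding Vform W_def w1_def w2_def by simp
    have Vp: "?V p t = (N + W)/2 - cos t * A - sin t * B + \<rho> * barrier r_s (sqrt N - r_o) + \<gamma>/2*t^2" for t
      unfolding VF N_def A_def B_def x1_def x2_def by simp
    have nN: "norm (p - p_o) = sqrt N" by (simp add: norm2 N_def x1_def x2_def)
    have Npos: "sqrt N \<ge> r_o + \<epsilon>" using pX nN by (simp add: free_space_def)
    have lag: "A^2 + B^2 = N * W" unfolding A_def B_def N_def W_def by algebra
    have "((\<lambda>t. ?V p t) has_real_derivative (sin \<theta> * A - cos \<theta> * B + \<gamma> * \<theta>)) (at \<theta>)"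
      unfolding Vp by (auto intro!: derivative_eq_intros simp: power2_eq_square algebra_simps)
    with dt have th_eq: "sin \<theta> * A - cos \<theta> * B + \<gamma> * \<theta> = 0" using DERIV_unique by blast
    have tang: "?V (p + s *\<^sub>R vector [- \<sigma> * x2, \<sigma> * x1]) \<theta> - ?V p \<theta>
        \<le> \<sigma> * (sin \<theta> * A - cos \<theta> * B) * s + (\<sigma>^2 * N / 2) * (s * s)" for s \<sigma>
    proof -
      have N': "(x1 + s * (- \<sigma> * x2))^2 + (x2 + s * (\<sigma> * x1))^2 = (1 + \<sigma>^2 * s^2) * N"
        unfolding N_def by algebra
      have b: "barrier r_s (sqrt ((1 + \<sigma>^2 * s^2) * N) - r_o) \<le> barrier r_s (sqrt N - r_o)"
      proof (rule barrier_mono)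
        show "0 < sqrt N - r_o" using Npos assms(2) by simp
        have N0: "0 \<le> N" unfolding N_def by simp
        have "N \<le> N + (\<sigma>^2 * s^2) * N" using N0 by simp
        then have "sqrt N \<le> sqrt ((1 + \<sigma>^2 * s^2) * N)" by (simp add: algebra_simps)
        then show "sqrt N - r_o \<le> sqrt ((1 + \<sigma>^2 * s^2) * N) - r_o" by simp
      qed (rule rs)
      have "\<rho> * barrier r_s (sqrt ((1 + \<sigma>^2 * s^2) * N) - r_o) \<le> \<rho> * barrier r_s (sqrt N - r_o)"
        using b assms(6) by simp
      moreover have "?V (p + s *\<^sub>R vector [- \<sigma> * x2, \<sigma> * x1]) \<theta> - ?V p \<theta>
        = \<sigma> * (sin \<theta> * A - cos \<theta> * B) * s + (\<sigma>^2 * N / 2) * (s * s)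
          + (\<rho> * barrier r_s (sqrt ((1 + \<sigma>^2 * s^2) * N) - r_o) - \<rho> * barrier r_s (sqrt N - r_o))"
        unfolding VF Vp comp_eqs vector_2 x1_def[symmetric] x2_def[symmetric] N'
        by (simp add: A_def B_def N_def power2_eq_square field_simps)
      ultimately show ?thesis by linarith
    qed
    have d1: "0 \<le> \<sigma> * (sin \<theta> * A - cos \<theta> * B)" for \<sigma>
      by (rule deriv0_bound[OF path_deriv[OF dp, of "vector [- \<sigma> * x2, \<sigma> * x1]"], of 1 _ "\<sigma>^2 * N / 2"])
         (use tang in auto)
    from d1[of 1] d1[of "-1"] have "sin \<theta> * A - cos \<theta> * B = 0" by simp
    with th_eq assms(10) have th0: "\<theta> = 0" by simp
    have B0: "B = 0" using \<open>sin \<theta> * A - cos \<theta> * B = 0\<close> th0 by simp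

    have N0: "0 \<le> N" unfolding N_def by simp
    have sNpos: "sqrt N > r_o" using Npos assms(2) by simp
    have rad: "?V (p + s *\<^sub>R vector [\<sigma> * x1, \<sigma> * x2]) 0 - ?V p 0 = \<sigma> * (N - A) * s + (\<sigma>^2 * N / 2) * (s * s)
       + \<rho> * (barrier r_s (\<bar>1 + \<sigma> * s\<bar> * sqrt N - r_o) - barrier r_s (sqrt N - r_o))" for s \<sigma>
    proof -
      have N': "(x1 + s * (\<sigma> * x1))^2 + (x2 + s * (\<sigma> * x2))^2 = (1 + \<sigma> * s)^2 * N"
        unfolding N_def by algebra
      have sq: "sqrt ((1 + \<sigma> * s)^2 * N) = \<bar>1 + \<sigma> * s\<bar> * sqrt N" by (simp add: real_sqrt_mult)
      show ?thesis
        unfolding VF Vp comp_eqs vector_2 x1_def[symmetric] x2_def[symmetric] N' sq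
        by (simp add: A_def B_def N_def power2_eq_square field_simps)
    qed
    have bnd1: "?V (p + s *\<^sub>R vector [x1, x2]) 0 - ?V p 0 \<le> (N - A) * s + N / 2 * (s * s)"
      if s: "0 < s" "s < 1" for s
    proof -
      have "barrier r_s (\<bar>1 + s\<bar> * sqrt N - r_o) \<le> barrier r_s (sqrt N - r_o)"
        using sNpos s N0 by (intro barrier_mono rs) (auto simp: distrib_right assms(1))
      then show "?V (p + s *\<^sub>R vector [x1, x2]) 0 - ?V p 0 \<le> (N - A) * s + N / 2 * (s * s)"
        using rad[of s 1] assms(6) by (simp add: mult_le_0_iff)
    qed
    have r1: "0 \<le> N - A"
      by (rule deriv0_bound[OF path_deriv[OF dp[unfolded th0], of "vector [x1, x2]"], of 1 "N - A" "N / 2"])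
         (use bnd1 in auto)
    have A2: "A^2 = N * W" using lag B0 by simp
    show ?thesis
    proof (cases "A \<ge> 0")
      case True
      have AA: "A = sqrt N * sqrt W"
        using A2 True by (metis real_sqrt_abs abs_of_nonneg real_sqrt_mult)
      have sNN: "sqrt N * sqrt N = N" using N0 by simp
      have "sqrt N * sqrt W \<le> sqrt N * sqrt N" using r1 AA sNN by simp
      moreover have "0 < sqrt N" using sNpos assms(1) by linarith
      ultimately have WN: "sqrt W \<le> sqrt N" using mult_le_cancel_left_pos by blast
      have "sqrt W = sqrt N"
      proof (rule ccontr)
        assume "sqrt W \<noteq> sqrt N"
        with WN have lt: "sqrt W < sqrt N" by simp
        define \<eta> where "\<eta> = (sqrt N - r_o - r_s) / sqrt N"
        have sN0: "0 < sqrt N" using sNpos assms(1) by linarith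
        have gtN: "r_o + r_s < sqrt N" using lt Wpos by linarith
        have eta1: "0 < \<eta>"
          unfolding \<eta>_def using gtN sN0 by (intro divide_pos_pos) linarith+
        have "sqrt N - r_o - r_s \<le> 1 * sqrt N" using assms(1) rs by linarith
        then have eta2: "\<eta> \<le> 1"
          unfolding \<eta>_def using pos_divide_le_eq[OF sN0] by blast
        note eta = eta1 eta2
        have bnd2: "?V (p + s *\<^sub>R vector [- 1 * x1, - 1 * x2]) 0 - ?V p 0 \<le> - (N - A) * s + N / 2 * (s * s)"
          if s: "0 < s" "s < \<eta>" for s
        proof -
          have "s * sqrt N < sqrt N - r_o - r_s" using s sN0 by (simp add: \<eta>_def divide_simps)
          then have gt: "(1 - s) * sqrt N - r_o > r_s" by (simp add: algebra_simps)
          have ab: "\<bar>1 + - 1 * s\<bar> = 1 - s" using s eta by simp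
          have "barrier r_s (\<bar>1 + - 1 * s\<bar> * sqrt N - r_o) = 0" unfolding ab using gt by (simp add: barrier_def)
          moreover have "barrier r_s (sqrt N - r_o) = 0" using gtN by (simp add: barrier_def)
          ultimately show "?V (p + s *\<^sub>R vector [- 1 * x1, - 1 * x2]) 0 - ?V p 0 \<le> - (N - A) * s + N / 2 * (s * s)"
            using rad[of s "-1"] by simp
        qed
        have "0 \<le> - (N - A)"
          by (rule deriv0_bound[OF path_deriv[OF dp[unfolded th0], of "vector [- 1 * x1, - 1 * x2]"], of \<eta> "- (N - A)" "N / 2"])
             (use bnd2 eta in auto)
        then have "A = N" using r1 by simp
        then have "sqrt N * sqrt W = sqrt N * sqrt N" using AA sNN by simp
        then have "sqrt W = sqrt N" using sN0 mult_left_cancel[of "sqrt N" "sqrt W" "sqrt N"] by simp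
        then show False using lt by linarith
      qed
      then have WN': "W = N" using N0 W_def by simp
      have "(x1 - w1)^2 + (x2 - w2)^2 = N - 2 * A + W" unfolding N_def A_def W_def by algebra
      also have "\<dots> = 0" using WN' AA \<open>sqrt W = sqrt N\<close> sNN by simp
      finally have "x1 = w1 \<and> x2 = w2" by (simp add: add_nonneg_eq_0_iff)
      then have "p = p_d" unfolding x1_def x2_def w1_def w2_def by (simp add: vec_eq_iff forall_2)
      with ne th0 show ?thesis by simp
    next
      case False
      have AA: "A = - (sqrt N * sqrt W)"
      proof -
        have "sqrt (A^2) = sqrt N * sqrt W" using A2 by (simp add: real_sqrt_mult)
        then show ?thesis using False by simp
      qed
      define M where "M = Max (abs ` \<Theta>)"
      have "M \<in> abs ` \<Theta>" unfolding M_def using assms(7,8) by (intro Max_in) auto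
      then obtain t where tT: "t \<in> \<Theta>" and tM: "\<bar>t\<bar> = M" by auto
      have t0: "0 < \<bar>t\<bar>" "\<bar>t\<bar> < pi" using assms(9) tT by auto
      have cb: "2 * t^2 / pi^2 \<le> 1 - cos t" using cos_bound t0 by simp
      have cpos: "0 < 2 * t^2 / pi^2" using t0 by simp
      have sW0: "0 < sqrt W" using Wpos assms(1) rs by linarith
      have gap: "?V p 0 - ?V p t = sqrt N * sqrt W * (1 - cos t) - \<gamma>/2 * t^2"
        unfolding Vp using AA B0 by (simp add: algebra_simps)
      have "r_o * sqrt W * (2 * t^2 / pi^2) < sqrt N * sqrt W * (2 * t^2 / pi^2)"
        using mult_strict_right_mono[OF mult_strict_right_mono[OF sNpos sW0] cpos] .
      also have "\<dots> \<le> sqrt N * sqrt W * (1 - cos t)"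
      proof (rule mult_left_mono[OF cb])
        show "0 \<le> sqrt N * sqrt W" using sNpos sW0 assms(1) by (intro mult_nonneg_nonneg) linarith+
      qed
      finally have g1: "r_o * sqrt W * (2 * t^2 / pi^2) - \<gamma>/2 * t^2 < ?V p 0 - ?V p t" using gap by simp
      have "\<delta> \<le> (2 * r_o * sqrt W / pi^2 - \<gamma> / 2) * t^2"
      proof -
        have "t^2 = (Max (abs ` \<Theta>))^2" using tM M_def by (metis power2_abs)
        then show ?thesis using \<delta> nW by simp
      qed
      also have "\<dots> = r_o * sqrt W * (2 * t^2 / pi^2) - \<gamma>/2 * t^2" by (simp add: algebra_simps)
      finally have "\<delta> < ?V p 0 - ?V p t" using g1 by simp
      moreover have "Min ((\<lambda>t. ?V p t) ` \<Theta>) \<le> ?V p t" using assms(7) tT by (intro Min_le) auto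
      ultimately show ?thesis using th0 by simp
    qed
  qed
  show "synergistic_nav \<Theta> ?X ?V {(p_d, 0)} \<delta>"
    unfolding synergistic_nav_def
  proof (intro conjI nonneg ballI)
    fix z assume "z \<in> crit_set ?X ?V - {(p_d, 0)}"
    then show "case z of (p, \<theta>) \<Rightarrow> \<delta> < ?V p \<theta> - Min ((\<lambda>t. ?V p t) ` \<Theta>)"
      using main by (cases z) simp
  qed
qed

end
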